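(* The only normal subgroups of $G=S(2^\infty)\ltimes \widetilde C(X;\mathbb{Z}_2)$ are $\{e\}$, $\widetilde C(X;\mathbb{Z}_2)$ and $G$.
   Context: For $n\ge1$ let $S(2^n)$ be the symmetric group of the finite set $\{0,1\}^n$, embedded in $S(2^{n+1})$ via $s\mapsto\tilde s$, $\tilde s(x,y)=(s(x),y)$ ($x\in\{0,1\}^n$, $y\in\{0,1\}$); $S(2^\infty)=\bigcup_n S(2^n)$. Let $X=\{0,1\}^{\mathbb N}$; $S(2^\infty)$ acts on $X$ by homeomorphisms via $s(x,y)=(s(x),y)$ for $s\in S(2^n)$, $x\in\{0,1\}^n$, $y\in\{0,1\}^{\mathbb N}$. $C(X;\mathbb Z_2)$ is the abelian group of continuous maps $X\to\mathbb Z_2$ under pointwise addition; its elements are $f_A=\mathbf 1_A$ for clopen $A\subseteq X$, with $f_Af_B=f_{A\triangle B}$. $S(2^\infty)$ acts by $g\cdot f_A=f_{g(A)}$. The constant functions $\{f_\emptyset,f_X\}$ form an invariant subgroup and $\widetilde C(X;\mathbb Z_2)$ is the quotient group; $\widetilde f_A$ denotes the class of $f_A$ (so $\widetilde f_A=\widetilde f_{X\setminus A}$). $G=S(2^\infty)\ltimes\widetilde C(X;\mathbb Z_2)$, with $g\widetilde f_Ag^{-1}=\widetilde f_{g(A)}$. *)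

theory Defs
  imports "HOL-Analysis.Analysis" "HOL-Algebra.Coset"
begin

text \<open>The Cantor space X = {0,1}^N, modelled as nat => bool with the product topology
  (bool carries its order topology, which is discrete).\<close>
type_synonym cantor = "nat \<Rightarrow> bool"

definition clopen_set :: "cantor set \<Rightarrow> bool" where
  "clopen_set A \<longleftrightarrow> open A \<and> closed A"

text \<open>S(2^infinity): the bijections of X induced by a permutation s of {0,1}^n for some n,
  i.e. g(x,y) = (s(x), y) with x the length-n prefix and y the tail.\<close>
definition Sinf :: "(cantor \<Rightarrow> cantor) set" where
  "Sinf = {g. \<exists>n. bij g
              \<and> (\<forall>x i. n \<le> i \<longrightarrow> g x i = x i)
              \<and> (\<forall>x y. (\<forall>i<n. x i = y i) \<longrightarrow> (\<forall>i<n. g x i = g y i))}"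

text \<open>The class of f_A in C(X;Z_2)/{constants}: identified with the set {A, X - A}.\<close>
definition cls :: "cantor set \<Rightarrow> cantor set set" where
  "cls A = {A, - A}"

definition Ctilde :: "cantor set set set" where
  "Ctilde = {cls A | A. clopen_set A}"

text \<open>Group operation on Ctilde: f_A f_B = f_{A symmetric difference B}.\<close>
definition csum :: "cantor set set \<Rightarrow> cantor set set \<Rightarrow> cantor set set" where
  "csum c d = {(A - B) \<union> (B - A) | A B. A \<in> c \<and> B \<in> d}"

text \<open>Action of S(2^infinity): g . f_A = f_{g(A)}.\<close>
definition cact :: "(cantor \<Rightarrow> cantor) \<Rightarrow> cantor set set \<Rightarrow> cantor set set" where
  "cact g c = (\<lambda>A. g ` A) ` c"

text \<open>G = S(2^infinity) semidirect Ctilde; a pair (c, g) stands for the product f g, so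
  (f g)(f' g') = (f (g f' g^-1)) (g g').\<close>
definition Ggrp :: "(cantor set set \<times> (cantor \<Rightarrow> cantor)) monoid" where
  "Ggrp = \<lparr> carrier = Ctilde \<times> Sinf,
            mult = (\<lambda>(c, g) (d, h). (csum c (cact g d), g \<circ> h)),
            one = (cls {}, id) \<rparr>"

definition Cpart :: "(cantor set set \<times> (cantor \<Rightarrow> cantor)) set" where
  "Cpart = Ctilde \<times> {id}"

end

theory Submission
  imports Defs
begin

definition agree :: "nat \<Rightarrow> cantor \<Rightarrow> cantor \<Rightarrow> bool" where
  "agree n x y \<longleftrightarrow> (\<forall>i<n. x i = y i)"

definition cyl :: "nat \<Rightarrow> cantor \<Rightarrow> cantor set" where
  "cyl n u = {x. agree n x u}"

definition dep :: "nat \<Rightarrow> cantor set \<Rightarrow> bool" where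
  "dep n A \<longleftrightarrow> (\<forall>x y. agree n x y \<longrightarrow> (x \<in> A \<longleftrightarrow> y \<in> A))"

lemma compact_cantor: "compact (UNIV :: cantor set)"
proof -
  have "compact_space (euclidean :: bool topology)"
    unfolding compact_space_def compactin_euclidean_iff topspace_euclidean
    by (rule finite_imp_compact) simp
  then have "compact_space (product_topology (\<lambda>i::nat. (euclidean :: bool topology)) UNIV)"
    by (simp add: compact_space_product_topology)
  then show ?thesis
    by (simp add: euclidean_product_topology compact_space_def)
qed

lemma open_cyl: "open (cyl n u)"
proof -
  have "cyl n u = {f. \<forall>i\<in>{..<n}. f (id i) \<in> {u i}}"
    by (auto simp: cyl_def agree_def)
  moreover have "open {f::cantor. \<forall>i\<in>{..<n}. f (id i) \<in> {u i}}"
    by (rule product_topology_basis') (simp_all add: open_discrete)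
  ultimately show ?thesis by simp
qed

lemma dep_mono: "dep n A \<Longrightarrow> n \<le> m \<Longrightarrow> dep m A"
proof -
  assume a: "dep n A" "n \<le> m"
  show ?thesis unfolding dep_def
  proof (intro allI impI)
    fix x y assume "agree m x y"
    then have "agree n x y" using a(2) by (auto simp: agree_def)
    then show "x \<in> A \<longleftrightarrow> y \<in> A" using a(1) by (auto simp: dep_def)
  qed
qed

lemma agree_refl[simp]: "agree n x x"
  by (simp add: agree_def)

lemma open_dep: "dep n A \<Longrightarrow> open A"
proof -
  assume d: "dep n A"
  show ?thesis unfolding open_subopen[of A]
  proof
    fix x assume x: "x \<in> A"
    have "cyl n x \<subseteq> A"
    proof
      fix y assume "y \<in> cyl n x"
      then have "agree n y x" by (simp add: cyl_def)
      then show "y \<in> A" using d x unfolding dep_def by blast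
    qed
    then show "\<exists>T. open T \<and> x \<in> T \<and> T \<subseteq> A"
      using open_cyl[of n x] by (intro exI[of _ "cyl n x"]) (simp add: cyl_def)
  qed
qed

lemma dep_compl: "dep n A \<Longrightarrow> dep n (- A)"
  unfolding dep_def by auto

lemma clopen_dep: "dep n A \<Longrightarrow> clopen_set A"
  unfolding clopen_set_def closed_def
  using open_dep dep_compl by blast

lemma dep_cyl: "dep n (cyl n u)"
  unfolding dep_def cyl_def agree_def mem_Collect_eq
  by metis

lemma clopen_cyl: "clopen_set (cyl n u)"
  using clopen_dep dep_cyl by blast

lemma open_has_cyl:
  assumes "open (U :: cantor set)" "x \<in> U"
  shows "\<exists>n. cyl n x \<subseteq> U"
proof -
  have "openin (product_topology (\<lambda>i. euclidean) UNIV) U"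
    using assms(1) by (simp add: open_fun_def)
  from product_topology_open_contains_basis[OF this assms(2)]
  obtain X where H: "x \<in> (\<Pi>\<^sub>E i\<in>UNIV. X i)" "finite {i. X i \<noteq> UNIV}" "(\<Pi>\<^sub>E i\<in>UNIV. X i) \<subseteq> U"
    by auto
  define n where "n = Suc (Max ({0} \<union> {i. X i \<noteq> UNIV}))"
  have "i < n" if "X i \<noteq> UNIV" for i
    using H(2) that unfolding n_def by (simp add: le_imp_less_Suc)
  then have "cyl n x \<subseteq> (\<Pi>\<^sub>E i\<in>UNIV. X i)"
    using H(1) by (force simp: cyl_def agree_def PiE_iff)
  then show ?thesis using H(3) by blast
qed

lemma clopen_imp_dep:
  assumes "clopen_set A"
  shows "\<exists>n. dep n A"
proof -
  have oA: "open A" and oB: "open (- A)" using assms by (auto simp: clopen_set_def)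
  have "\<forall>x. \<exists>n. cyl n x \<subseteq> A \<or> cyl n x \<subseteq> - A"
  proof
    fix x show "\<exists>n. cyl n x \<subseteq> A \<or> cyl n x \<subseteq> - A"
      using open_has_cyl[OF oA, of x] open_has_cyl[OF oB, of x] by (cases "x \<in> A") auto
  qed
  then obtain N where N: "\<And>x. cyl (N x) x \<subseteq> A \<or> cyl (N x) x \<subseteq> - A" by metis
  have "UNIV \<subseteq> (\<Union>x\<in>UNIV. cyl (N x) x)" by (auto simp: cyl_def agree_def)
  from compactE_image[OF compact_cantor _ this] open_cyl
  obtain C where C: "finite C" "UNIV \<subseteq> (\<Union>x\<in>C. cyl (N x) x)" by metis
  define n where "n = Max ({0} \<union> N ` C)"
  have Nn: "N x \<le> n" if "x \<in> C" for x using C(1) that unfolding n_def by auto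
  have "dep n A"
    unfolding dep_def
  proof (intro allI impI)
    fix y z assume yz: "agree n y z"
    obtain x where x: "x \<in> C" "y \<in> cyl (N x) x" using C(2) by blast
    have "z \<in> cyl (N x) x" using x yz Nn[OF x(1)] by (auto simp: cyl_def agree_def)
    then show "y \<in> A \<longleftrightarrow> z \<in> A" using x N[of x] by blast
  qed
  then show ?thesis by blast
qed

abbreviation finv :: "(cantor \<Rightarrow> cantor) \<Rightarrow> cantor \<Rightarrow> cantor" where
  "finv g \<equiv> inv_into UNIV g"

lemma finv_f[simp]: "bij g \<Longrightarrow> finv g (g x) = x"
  by (simp add: bij_def inv_f_f)
lemma f_finv[simp]: "bij g \<Longrightarrow> g (finv g x) = x"
  by (simp add: bij_def surj_f_inv_f)

definition lvl :: "nat \<Rightarrow> (cantor \<Rightarrow> cantor) \<Rightarrow> bool" where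
  "lvl n g \<longleftrightarrow> (\<forall>x i. n \<le> i \<longrightarrow> g x i = x i) \<and> (\<forall>x y. agree n x y \<longrightarrow> agree n (g x) (g y))"

lemma Sinf_iff: "g \<in> Sinf \<longleftrightarrow> bij g \<and> (\<exists>n. lvl n g)"
  unfolding Sinf_def lvl_def agree_def by blast

lemma lvl_high: "lvl n g \<Longrightarrow> n \<le> i \<Longrightarrow> g x i = x i"
  unfolding lvl_def by blast

lemma lvl_agree: "lvl n g \<Longrightarrow> agree n x y \<Longrightarrow> agree n (g x) (g y)"
  unfolding lvl_def by blast

lemma lvl_mono: assumes "lvl n g" "n \<le> m" shows "lvl m g"
  unfolding lvl_def
proof (intro conjI allI impI)
  fix x i assume "m \<le> i" then show "g x i = x i" using assms lvl_high by auto
next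
  fix x y assume a: "agree m x y"
  then have "agree n x y" using assms(2) by (auto simp: agree_def)
  then have b: "agree n (g x) (g y)" using assms(1) lvl_agree by blast
  show "agree m (g x) (g y)"
    unfolding agree_def
  proof (intro allI impI)
    fix i assume "i < m"
    show "g x i = g y i"
    proof (cases "i < n")
      case True then show ?thesis using b by (auto simp: agree_def)
    next
      case False then show ?thesis using lvl_high[OF assms(1)] a \<open>i < m\<close> by (auto simp: agree_def)
    qed
  qed
qed

lemma lvl_id: "lvl n id" unfolding lvl_def by auto

lemma lvl_comp: "lvl n g \<Longrightarrow> lvl n h \<Longrightarrow> lvl n (g \<circ> h)"
  unfolding lvl_def by auto

definition spl :: "nat \<Rightarrow> cantor \<Rightarrow> cantor \<Rightarrow> cantor" where
  "spl n a z = (\<lambda>i. if i < n then a i else z i)"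

lemma agree_spl: "agree n (spl n a z) a"
  by (simp add: agree_def spl_def)

lemma spl_agree_self: "agree n z a \<Longrightarrow> spl n a z = z"
  by (auto simp: agree_def spl_def fun_eq_iff)

lemma lvl_spl: assumes "lvl n g" shows "g (spl n a z) = spl n (g a) (g z)"
proof
  fix i show "g (spl n a z) i = spl n (g a) (g z) i"
  proof (cases "i < n")
    case True
    have "agree n (g (spl n a z)) (g a)" using lvl_agree[OF assms agree_spl] .
    then show ?thesis using True by (simp add: agree_def spl_def)
  next
    case False
    then show ?thesis using lvl_high[OF assms] by (simp add: spl_def)
  qed
qed

lemma lvl_inv: assumes "bij g" "lvl n g" shows "lvl n (finv g)"
  unfolding lvl_def
proof (intro conjI allI impI)
  fix x i assume "n \<le> i"
  have "g (finv g x) i = finv g x i" using lvl_high[OF assms(2) \<open>n \<le> i\<close>] .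
  then show "finv g x i = x i" using assms(1) by (simp add: bij_inv_eq_iff)
next
  fix x y assume a: "agree n x y"
  define y' where "y' = finv g y"
  define x' where "x' = finv g x"
  have "g (spl n x' y') = spl n (g x') (g y')" using lvl_spl[OF assms(2)] .
  also have "\<dots> = spl n x y" using assms(1) by (simp add: x'_def y'_def bij_inv_eq_iff)
  also have "\<dots> = y" using a by (auto simp: agree_def spl_def fun_eq_iff)
  finally have "spl n x' y' = y'" using assms(1) by (simp add: y'_def bij_inv_eq_iff)
  then show "agree n (finv g x) (finv g y)"
    using agree_spl[of n x' y'] by (simp add: x'_def y'_def agree_def)
qed

lemma lvl_agree_iff: assumes "bij g" "lvl n g" shows "agree n (g x) (g y) \<longleftrightarrow> agree n x y"
proof
  assume "agree n (g x) (g y)"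
  from lvl_agree[OF lvl_inv[OF assms] this] show "agree n x y"
    using assms(1) by (simp add: bij_inv_eq_iff)
qed (rule lvl_agree[OF assms(2)])

lemma Sinf_comp: "g \<in> Sinf \<Longrightarrow> h \<in> Sinf \<Longrightarrow> g \<circ> h \<in> Sinf"
proof -
  assume a: "g \<in> Sinf" "h \<in> Sinf"
  then obtain n m where "lvl n g" "lvl m h" "bij g" "bij h" by (auto simp: Sinf_iff)
  then have "lvl (max n m) g" "lvl (max n m) h" by (auto intro: lvl_mono)
  then show ?thesis using \<open>bij g\<close> \<open>bij h\<close> by (auto simp: Sinf_iff intro: lvl_comp bij_comp)
qed

lemma Sinf_inv: "g \<in> Sinf \<Longrightarrow> finv g \<in> Sinf"
  by (auto simp: Sinf_iff intro: lvl_inv bij_imp_bij_inv)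

lemma Sinf_id: "id \<in> Sinf"
  using lvl_id[of 0] by (auto simp: Sinf_iff)

lemma agree_sym: "agree n x y \<Longrightarrow> agree n y x" by (auto simp: agree_def)
lemma agree_trans: "agree n x y \<Longrightarrow> agree n y z \<Longrightarrow> agree n x z" by (auto simp: agree_def)
lemma agree_le: "agree m x y \<Longrightarrow> n \<le> m \<Longrightarrow> agree n x y" by (auto simp: agree_def)

lemma lvl_continuous: assumes "lvl n g" shows "continuous_on UNIV g"
proof (rule continuous_on_coordinatewise_then_product)
  fix i
  show "continuous_on UNIV (\<lambda>x. g x i)"
  proof (cases "n \<le> i")
    case True
    then have "(\<lambda>x. g x i) = (\<lambda>x. x i)" using lvl_high[OF assms] by auto
    then show ?thesis by (simp only: continuous_on_product_coordinates)
  next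
    case False
    show ?thesis unfolding continuous_on_open_vimage[OF open_UNIV]
    proof (intro allI impI)
      fix B :: "bool set"
      have "dep n ((\<lambda>x. g x i) -` B \<inter> UNIV)"
        unfolding dep_def
      proof (intro allI impI)
        fix x y assume "agree n x y"
        then have "agree n (g x) (g y)" using lvl_agree[OF assms] by blast
        then have "g x i = g y i" using False by (simp add: agree_def)
        then show "x \<in> (\<lambda>x. g x i) -` B \<inter> UNIV \<longleftrightarrow> y \<in> (\<lambda>x. g x i) -` B \<inter> UNIV" by simp
      qed
      then show "open ((\<lambda>x. g x i) -` B \<inter> UNIV)" by (rule open_dep)
    qed
  qed
qed

lemma clopen_vimage: assumes "lvl n g" "clopen_set A" shows "clopen_set (g -` A)"
proof -
  have c: "continuous_on UNIV g" by (rule lvl_continuous[OF assms(1)])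
  have "open (g -` A)" using assms(2) c by (auto simp: clopen_set_def intro: open_vimage)
  moreover have "closed (g -` A \<inter> UNIV)" using assms(2) c
    unfolding continuous_on_closed_vimage[OF closed_UNIV] clopen_set_def by blast
  ultimately show ?thesis by (simp add: clopen_set_def)
qed

lemma Sinf_image_clopen: assumes "g \<in> Sinf" "clopen_set A" shows "clopen_set (g ` A)"
proof -
  obtain n where b: "bij g" "lvl n g" using assms(1) by (auto simp: Sinf_iff)
  have "g ` A = finv g -` A"
  proof
    show "g ` A \<subseteq> finv g -` A" using b(1) by auto
    show "finv g -` A \<subseteq> g ` A"
    proof
      fix x assume "x \<in> finv g -` A"
      then have "finv g x \<in> A" by simp
      moreover have "x = g (finv g x)" using b(1) by simp
      ultimately show "x \<in> g ` A" by blast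
    qed
  qed
  then show ?thesis using clopen_vimage[OF lvl_inv[OF b] assms(2)] by simp
qed

lemma clopen_empty: "clopen_set {}" by (simp add: clopen_set_def)
lemma clopen_UNIV: "clopen_set UNIV" by (simp add: clopen_set_def)
lemma clopen_compl: "clopen_set A \<Longrightarrow> clopen_set (- A)"
  by (simp add: clopen_set_def open_Compl closed_Compl)
lemma clopen_Un: "clopen_set A \<Longrightarrow> clopen_set B \<Longrightarrow> clopen_set (A \<union> B)"
  by (simp add: clopen_set_def open_Un closed_Un)
lemma clopen_Diff: "clopen_set A \<Longrightarrow> clopen_set B \<Longrightarrow> clopen_set (A - B)"
  by (simp add: clopen_set_def open_Diff closed_Diff)

lemma lvl_image_cyl: assumes "bij g" "lvl n g" shows "g ` cyl n a = cyl n (g a)"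
proof
  show "g ` cyl n a \<subseteq> cyl n (g a)" using lvl_agree[OF assms(2)] by (auto simp: cyl_def)
next
  show "cyl n (g a) \<subseteq> g ` cyl n a"
  proof
    fix y assume "y \<in> cyl n (g a)"
    then have "agree n y (g a)" by (simp add: cyl_def)
    then have "agree n (finv g y) (finv g (g a))" using lvl_agree[OF lvl_inv[OF assms]] by blast
    then have "finv g y \<in> cyl n a" using assms(1) by (simp add: cyl_def bij_inv_eq_iff)
    moreover have "y = g (finv g y)" using assms(1) by (simp add: bij_inv_eq_iff)
    ultimately show "y \<in> g ` cyl n a" by blast
  qed
qed

definition swp :: "nat \<Rightarrow> cantor \<Rightarrow> cantor \<Rightarrow> cantor \<Rightarrow> cantor" where
  "swp n u v z = (if agree n z u then spl n v z else if agree n z v then spl n u z else z)"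

lemma spl_spl[simp]: "spl n a (spl n b z) = spl n a z"
  by (auto simp: spl_def fun_eq_iff)

lemma agree_spl_iff: "agree n (spl n a z) w \<longleftrightarrow> agree n a w"
  by (simp add: agree_def spl_def)

lemma swp_u: "agree n z u \<Longrightarrow> agree n (swp n u v z) v"
  by (simp add: swp_def agree_spl)

lemma swp_v: "\<not> agree n z u \<Longrightarrow> agree n z v \<Longrightarrow> agree n (swp n u v z) u"
  by (simp add: swp_def agree_spl)

lemma swp_fix: "\<not> agree n z u \<Longrightarrow> \<not> agree n z v \<Longrightarrow> swp n u v z = z"
  by (simp add: swp_def)

lemma swp_invol[simp]: "swp n u v (swp n u v z) = z"
proof (cases "agree n z u")
  case True
  show ?thesis
  proof (cases "agree n v u")
    case True
    then have "agree n (spl n v z) u" by (simp add: agree_spl_iff)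
    moreover have "spl n v z = z" using \<open>agree n z u\<close> True
      by (meson agree_sym agree_trans spl_agree_self)
    ultimately show ?thesis using \<open>agree n z u\<close> by (simp add: swp_def)
  next
    case False
    then have "\<not> agree n (spl n v z) u" by (simp add: agree_spl_iff)
    moreover have "agree n (spl n v z) v" by (simp add: agree_spl)
    ultimately show ?thesis using \<open>agree n z u\<close> by (simp add: swp_def spl_agree_self)
  qed
next
  case False
  show ?thesis
  proof (cases "agree n z v")
    case True
    have "agree n (spl n u z) u" by (simp add: agree_spl)
    then show ?thesis using False True by (simp add: swp_def spl_agree_self)
  next
    case F2: False
    then show ?thesis using False by (simp add: swp_def)
  qed
qed

lemma swp_comp_self: "swp n u v \<circ> swp n u v = id"
  by (simp add: fun_eq_iff)

lemma bij_swp: "bij (swp n u v)"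
  by (rule o_bij[OF swp_comp_self swp_comp_self])

lemma lvl_swp: "lvl n (swp n u v)"
  unfolding lvl_def
proof (intro conjI allI impI)
  fix x i assume "n \<le> i" then show "swp n u v x i = x i" by (simp add: swp_def spl_def)
next
  fix x y assume a: "agree n x y"
  have iu: "agree n x u \<longleftrightarrow> agree n y u" using a agree_sym agree_trans by blast
  have iv: "agree n x v \<longleftrightarrow> agree n y v" using a agree_sym agree_trans by blast
  show "agree n (swp n u v x) (swp n u v y)"
  proof (cases "agree n x u")
    case True
    then have "agree n (swp n u v x) v" "agree n (swp n u v y) v" using iu swp_u by blast+
    then show ?thesis using agree_sym agree_trans by blast
  next
    case False
    show ?thesis
    proof (cases "agree n x v")
      case True
      then have "agree n (swp n u v x) u" "agree n (swp n u v y) u" using iu iv False swp_v by blast+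
      then show ?thesis using agree_sym agree_trans by blast
    next
      case F2: False
      then show ?thesis using iu iv False a by (simp add: swp_fix)
    qed
  qed
qed

lemma swp_Sinf: "swp n u v \<in> Sinf"
  unfolding Sinf_iff using bij_swp lvl_swp by blast

lemma spl_cong: "agree n a b \<Longrightarrow> spl n a z = spl n b z"
  by (auto simp: agree_def spl_def fun_eq_iff)

lemma swp_cong: assumes "agree n u u'" "agree n v v'" shows "swp n u v = swp n u' v'"
proof
  fix z
  have "agree n z u \<longleftrightarrow> agree n z u'" "agree n z v \<longleftrightarrow> agree n z v'"
    using assms agree_sym agree_trans by blast+
  then show "swp n u v z = swp n u' v' z"
    using spl_cong[OF assms(1)] spl_cong[OF assms(2)] by (simp add: swp_def)
qed

lemma swp_self: "agree n u v \<Longrightarrow> swp n u v = id"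
proof
  fix z assume a: "agree n u v"
  show "swp n u v z = id z"
  proof (cases "agree n z u")
    case True then show ?thesis using a by (simp add: swp_def) (meson agree_trans spl_agree_self)
  next
    case False then show ?thesis using a by (simp add: swp_def) (meson agree_sym agree_trans spl_agree_self)
  qed
qed

lemma swp_conj: assumes "bij s" "lvl n s"
  shows "s \<circ> swp n u v \<circ> finv s = swp n (s u) (s v)"
proof
  fix z
  define z' where "z' = finv s z"
  have z: "z = s z'" using assms(1) by (simp add: z'_def)
  have iu: "agree n z (s u) \<longleftrightarrow> agree n z' u" unfolding z using lvl_agree_iff[OF assms] .
  have iv: "agree n z (s v) \<longleftrightarrow> agree n z' v" unfolding z using lvl_agree_iff[OF assms] .
  have "(s \<circ> swp n u v \<circ> finv s) z = s (swp n u v z')" by (simp add: z'_def)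
  also have "\<dots> = swp n (s u) (s v) z"
    using iu iv unfolding swp_def by (simp add: lvl_spl[OF assms(2)] z)
  finally show "(s \<circ> swp n u v \<circ> finv s) z = swp n (s u) (s v) z" .
qed

definition sd :: "cantor set \<Rightarrow> cantor set \<Rightarrow> cantor set" where
  "sd A B = (A - B) \<union> (B - A)"

lemma csum_cls: "csum (cls A) (cls B) = cls (sd A B)"
proof (rule Set.set_eqI)
  fix x
  have e1: "sd A (- B) = - sd A B" and e2: "sd (- A) B = - sd A B" and e3: "sd (- A) (- B) = sd A B"
    by (auto simp: sd_def)
  have "x \<in> csum (cls A) (cls B) \<longleftrightarrow> (\<exists>X Y. x = sd X Y \<and> X \<in> cls A \<and> Y \<in> cls B)"
    unfolding csum_def sd_def by blast
  also have "\<dots> \<longleftrightarrow> x \<in> {sd A B, sd A (- B), sd (- A) B, sd (- A) (- B)}"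
    unfolding cls_def by blast
  also have "\<dots> \<longleftrightarrow> x \<in> cls (sd A B)"
    unfolding e1 e2 e3 cls_def by blast
  finally show "x \<in> csum (cls A) (cls B) \<longleftrightarrow> x \<in> cls (sd A B)" .
qed

lemma cact_cls: "bij g \<Longrightarrow> cact g (cls A) = cls (g ` A)"
  by (simp add: cact_def cls_def bij_image_Compl_eq)

lemma cls_eq_iff: "cls A = cls B \<longleftrightarrow> (B = A \<or> B = - A)"
proof
  assume "cls A = cls B"
  then have "A \<in> {B, - B}" by (metis cls_def insertI1)
  then show "B = A \<or> B = - A" by auto
qed (auto simp: cls_def)

lemma cls_Ctilde: "cls A \<in> Ctilde \<longleftrightarrow> clopen_set A"
proof
  assume "cls A \<in> Ctilde"
  then obtain B where "cls A = cls B" "clopen_set B" by (auto simp: Ctilde_def)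
  then show "clopen_set A" by (metis cls_eq_iff clopen_compl double_complement)
qed (auto simp: Ctilde_def)

lemma carrier_G: "x \<in> carrier Ggrp \<longleftrightarrow> (\<exists>A g. x = (cls A, g) \<and> clopen_set A \<and> g \<in> Sinf)"
  by (auto simp: Ggrp_def Ctilde_def)

lemma carrier_G2: "(cls A, g) \<in> carrier Ggrp \<longleftrightarrow> clopen_set A \<and> g \<in> Sinf"
  by (simp add: Ggrp_def cls_Ctilde)

lemma one_G: "\<one>\<^bsub>Ggrp\<^esub> = (cls {}, id)"
  by (simp add: Ggrp_def)

lemma mult_cls: "bij g \<Longrightarrow> (cls A, g) \<otimes>\<^bsub>Ggrp\<^esub> (cls B, h) = (cls (sd A (g ` B)), g \<circ> h)"
  by (simp add: Ggrp_def csum_cls cact_cls)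

lemma clopen_sd: "clopen_set A \<Longrightarrow> clopen_set B \<Longrightarrow> clopen_set (sd A B)"
  unfolding sd_def by (intro clopen_Un clopen_Diff)

lemma image_sd: "inj g \<Longrightarrow> g ` sd A B = sd (g ` A) (g ` B)"
  by (simp add: sd_def image_Un image_set_diff)

lemma sd_assoc: "sd (sd A B) C = sd A (sd B C)" by (auto simp: sd_def)
lemma sd_empty[simp]: "sd {} A = A" "sd A {} = A" by (auto simp: sd_def)
lemma sd_self[simp]: "sd A A = {}" by (auto simp: sd_def)

lemma Sinf_bij: "g \<in> Sinf \<Longrightarrow> bij g" by (simp add: Sinf_iff)

lemma group_G: "group Ggrp"
proof (rule groupI)
  fix x y assume "x \<in> carrier Ggrp" "y \<in> carrier Ggrp"
  then obtain A g B h where x: "x = (cls A, g)" "clopen_set A" "g \<in> Sinf"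
    and y: "y = (cls B, h)" "clopen_set B" "h \<in> Sinf" by (auto simp: carrier_G)
  show "x \<otimes>\<^bsub>Ggrp\<^esub> y \<in> carrier Ggrp"
    using x y by (simp add: mult_cls Sinf_bij carrier_G2 clopen_sd Sinf_image_clopen Sinf_comp)
next
  show "\<one>\<^bsub>Ggrp\<^esub> \<in> carrier Ggrp" by (simp add: one_G carrier_G2 clopen_empty Sinf_id)
next
  fix x y z assume "x \<in> carrier Ggrp" "y \<in> carrier Ggrp" "z \<in> carrier Ggrp"
  then obtain A g B h C k where x: "x = (cls A, g)" "clopen_set A" "g \<in> Sinf"
    and y: "y = (cls B, h)" "clopen_set B" "h \<in> Sinf"
    and z: "z = (cls C, k)" "clopen_set C" "k \<in> Sinf" by (auto simp: carrier_G)
  have bg: "bij g" and bh: "bij h" using x y by (auto simp: Sinf_bij)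
  then have bgh: "bij (g \<circ> h)" by (rule bij_comp[rotated])
  show "x \<otimes>\<^bsub>Ggrp\<^esub> y \<otimes>\<^bsub>Ggrp\<^esub> z = x \<otimes>\<^bsub>Ggrp\<^esub> (y \<otimes>\<^bsub>Ggrp\<^esub> z)"
    using x y z bg bh bgh
    by (simp add: mult_cls image_sd bij_is_inj sd_assoc image_comp o_assoc)
next
  fix x assume "x \<in> carrier Ggrp"
  then obtain A g where x: "x = (cls A, g)" "clopen_set A" "g \<in> Sinf" by (auto simp: carrier_G)
  show "\<one>\<^bsub>Ggrp\<^esub> \<otimes>\<^bsub>Ggrp\<^esub> x = x" using x by (simp add: one_G mult_cls)
next
  fix x assume "x \<in> carrier Ggrp"
  then obtain A g where x: "x = (cls A, g)" "clopen_set A" "g \<in> Sinf" by (auto simp: carrier_G)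
  have bg: "bij g" using x by (simp add: Sinf_bij)
  have bi: "bij (finv g)" using bg by (simp add: bij_imp_bij_inv)
  have "(cls (finv g ` A), finv g) \<otimes>\<^bsub>Ggrp\<^esub> x = \<one>\<^bsub>Ggrp\<^esub>"
    using x bi bg by (simp add: mult_cls one_G image_comp inv_o_cancel bij_is_inj)
  moreover have "(cls (finv g ` A), finv g) \<in> carrier Ggrp"
    using x by (simp add: carrier_G2 Sinf_inv Sinf_image_clopen)
  ultimately show "\<exists>y\<in>carrier Ggrp. y \<otimes>\<^bsub>Ggrp\<^esub> x = \<one>\<^bsub>Ggrp\<^esub>" by blast
qed

interpretation G: group Ggrp by (rule group_G)

lemma inv_G: assumes "clopen_set A" "g \<in> Sinf"
  shows "inv\<^bsub>Ggrp\<^esub> (cls A, g) = (cls (finv g ` A), finv g)"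
proof (rule G.inv_equality)
  have bg: "bij g" using assms by (simp add: Sinf_bij)
  have bi: "bij (finv g)" using bg by (simp add: bij_imp_bij_inv)
  show "(cls (finv g ` A), finv g) \<otimes>\<^bsub>Ggrp\<^esub> (cls A, g) = \<one>\<^bsub>Ggrp\<^esub>"
    using bi bg by (simp add: mult_cls one_G image_comp inv_o_cancel bij_is_inj)
  show "(cls A, g) \<in> carrier Ggrp" using assms by (simp add: carrier_G2)
  show "(cls (finv g ` A), finv g) \<in> carrier Ggrp"
    using assms by (simp add: carrier_G2 Sinf_inv Sinf_image_clopen)
qed

definition E :: "cantor set \<Rightarrow> cantor set set \<times> (cantor \<Rightarrow> cantor)" where
  "E A = (cls A, id)"
definition P :: "(cantor \<Rightarrow> cantor) \<Rightarrow> cantor set set \<times> (cantor \<Rightarrow> cantor)" where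
  "P g = (cls {}, g)"

lemma E_carrier: "clopen_set A \<Longrightarrow> E A \<in> carrier Ggrp"
  by (simp add: E_def carrier_G2 Sinf_id)
lemma P_carrier: "g \<in> Sinf \<Longrightarrow> P g \<in> carrier Ggrp"
  by (simp add: P_def carrier_G2 clopen_empty)
lemma E_mult: "E A \<otimes>\<^bsub>Ggrp\<^esub> E B = E (sd A B)"
  by (simp add: E_def mult_cls)
lemma E_inv: "clopen_set A \<Longrightarrow> inv\<^bsub>Ggrp\<^esub> (E A) = E A"
  by (simp add: E_def inv_G Sinf_id)
lemma P_mult: "bij g \<Longrightarrow> P g \<otimes>\<^bsub>Ggrp\<^esub> P h = P (g \<circ> h)"
  by (simp add: P_def mult_cls)
lemma P_inv: "g \<in> Sinf \<Longrightarrow> inv\<^bsub>Ggrp\<^esub> (P g) = P (finv g)"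
  by (simp add: P_def inv_G clopen_empty)
lemma E_one: "E {} = \<one>\<^bsub>Ggrp\<^esub>" by (simp add: E_def one_G)
lemma P_one: "P id = \<one>\<^bsub>Ggrp\<^esub>" by (simp add: P_def one_G)

lemma conj_P_E: assumes "g \<in> Sinf" "clopen_set A"
  shows "P g \<otimes>\<^bsub>Ggrp\<^esub> E A \<otimes>\<^bsub>Ggrp\<^esub> inv\<^bsub>Ggrp\<^esub> (P g) = E (g ` A)"
proof -
  have bg: "bij g" using assms by (simp add: Sinf_bij)
  have "g \<circ> finv g = id" using bg by (simp add: surj_iff[THEN iffD1] bij_is_surj)
  then show ?thesis unfolding P_inv[OF assms(1)] using bg
    by (simp add: P_def E_def mult_cls)
qed

lemma E_P: "E A \<otimes>\<^bsub>Ggrp\<^esub> P g = (cls A, g)"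
  by (simp add: E_def P_def mult_cls)

lemma cyl_cong: "agree m a b \<Longrightarrow> cyl m a = cyl m b"
  unfolding cyl_def agree_def by auto

lemma mem_cyl: "z \<in> cyl m a \<longleftrightarrow> agree m z a" by (simp add: cyl_def)

lemma not_agree_lvl: assumes "lvl n g" "g x \<noteq> x" shows "\<not> agree n (g x) x"
proof
  assume a: "agree n (g x) x"
  have "g x = x"
  proof
    fix i show "g x i = x i"
      using a lvl_high[OF assms(1), of i x] by (cases "i < n") (auto simp: agree_def)
  qed
  then show False using assms(2) by simp
qed

lemma not_agree_mono: "\<not> agree n x y \<Longrightarrow> n \<le> m \<Longrightarrow> \<not> agree m x y"
  using agree_le by metis

definition pt :: "bool list \<Rightarrow> cantor" where
  "pt xs = (\<lambda>i. if i < length xs then xs ! i else False)"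

context
  fixes N assumes nN: "N \<lhd> Ggrp"
begin

lemma sgN: "subgroup N Ggrp" using G.normal_inv_iff[THEN iffD1, OF nN] by (rule conjunct1)

lemma N_mult: "a \<in> N \<Longrightarrow> b \<in> N \<Longrightarrow> a \<otimes>\<^bsub>Ggrp\<^esub> b \<in> N"
  by (rule subgroup.m_closed[OF sgN])
lemma N_inv: "a \<in> N \<Longrightarrow> inv\<^bsub>Ggrp\<^esub> a \<in> N"
  by (rule subgroup.m_inv_closed[OF sgN])
lemma N_one: "\<one>\<^bsub>Ggrp\<^esub> \<in> N"
  by (rule subgroup.one_closed[OF sgN])
lemma N_sub: "N \<subseteq> carrier Ggrp"
  by (rule subgroup.subset[OF sgN])
lemma N_conj: "x \<in> carrier Ggrp \<Longrightarrow> h \<in> N \<Longrightarrow> x \<otimes>\<^bsub>Ggrp\<^esub> h \<otimes>\<^bsub>Ggrp\<^esub> inv\<^bsub>Ggrp\<^esub> x \<in> N"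
proof -
  assume a: "x \<in> carrier Ggrp" "h \<in> N"
  have "\<forall>x\<in>carrier Ggrp. \<forall>h\<in>N. x \<otimes>\<^bsub>Ggrp\<^esub> h \<otimes>\<^bsub>Ggrp\<^esub> inv\<^bsub>Ggrp\<^esub> x \<in> N"
    using G.normal_inv_iff[THEN iffD1, OF nN] by (rule conjunct2)
  then show ?thesis using a by blast
qed


lemma step1:
  assumes "(cls C, g) \<in> N" "g \<noteq> id"
  shows "\<exists>D. clopen_set D \<and> D \<noteq> {} \<and> D \<noteq> UNIV \<and> E D \<in> N"
proof -
  have cC: "clopen_set C" and gS: "g \<in> Sinf" using N_sub assms(1) by (auto simp: carrier_G2)
  obtain n where bg: "bij g" and ln: "lvl n g" using gS by (auto simp: Sinf_iff)
  obtain x where gx: "g x \<noteq> x" using assms(2) by (metis eq_id_iff)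
  have na: "\<not> agree n (g x) x" using not_agree_lvl[OF ln gx] .
  define m where "m = Suc n"
  have lm: "lvl m g" using lvl_mono[OF ln] by (simp add: m_def)
  define B where "B = cyl m x"
  have gB: "g ` B = cyl m (g x)" unfolding B_def by (rule lvl_image_cyl[OF bg lm])
  have cB: "clopen_set B" by (simp add: B_def clopen_cyl)
  have EB: "E B \<in> carrier Ggrp" using cB by (rule E_carrier)
  have h1: "E B \<otimes>\<^bsub>Ggrp\<^esub> (cls C, g) \<otimes>\<^bsub>Ggrp\<^esub> inv\<^bsub>Ggrp\<^esub> (E B) \<in> N"
    using N_conj[OF EB assms(1)] .
  have h2: "inv\<^bsub>Ggrp\<^esub> (cls C, g) \<in> N" using N_inv[OF assms(1)] .
  have ggC: "g ` finv g ` C = C" using bg by (simp add: image_comp surj_iff[THEN iffD1] bij_is_surj)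
  have gid: "g \<circ> finv g = id" using bg by (simp add: surj_iff[THEN iffD1] bij_is_surj)
  have "E B \<otimes>\<^bsub>Ggrp\<^esub> (cls C, g) \<otimes>\<^bsub>Ggrp\<^esub> inv\<^bsub>Ggrp\<^esub> (E B) \<otimes>\<^bsub>Ggrp\<^esub> inv\<^bsub>Ggrp\<^esub> (cls C, g)
        = (cls (sd (sd (sd B C) (g ` B)) (g ` finv g ` C)), g \<circ> finv g)"
    unfolding E_inv[OF cB] inv_G[OF cC gS] using bg by (simp add: E_def mult_cls)
  also have "\<dots> = E (sd B (g ` B))"
  proof -
    have "sd (sd (sd B C) (g ` B)) C = sd B (g ` B)" by (auto simp: sd_def)
    then show ?thesis unfolding ggC gid E_def by simp
  qed
  finally have inN: "E (sd B (g ` B)) \<in> N" using N_mult[OF h1 h2] by simp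
  have x1: "x \<in> B" by (simp add: B_def mem_cyl)
  have "\<not> agree n x (g x)" using na agree_sym by blast
  then have "\<not> agree m x (g x)" using not_agree_mono[of n x "g x" m] by (simp add: m_def)
  then have x2: "x \<notin> g ` B" unfolding gB mem_cyl .
  have "x \<in> sd B (g ` B)" using x1 x2 by (simp add: sd_def)
  moreover have "x(n := \<not> x n) \<notin> sd B (g ` B)"
  proof -
    have "g x n = x n" using lvl_high[OF ln] by simp
    then have "x(n := \<not> x n) \<notin> cyl m (g x)" by (auto simp: mem_cyl agree_def m_def)
    moreover have "x(n := \<not> x n) \<notin> cyl m x" by (auto simp: mem_cyl agree_def m_def)
    ultimately show ?thesis unfolding gB unfolding B_def sd_def by blast
  qed
  moreover have "clopen_set (sd B (g ` B))" using cB by (simp add: clopen_sd gB clopen_cyl)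
  ultimately show ?thesis using inN by blast
qed

lemma pair_in:
  assumes "E A \<in> N" "clopen_set A" "dep m A" "x \<in> A" "y \<notin> A"
  shows "E (cyl m x \<union> cyl m y) \<in> N"
proof -
  define s where "s = swp m x y"
  have sS: "s \<in> Sinf" by (simp add: s_def swp_Sinf)
  have h1: "E (s ` A) \<in> N" using N_conj[OF P_carrier[OF sS] assms(1)] conj_P_E[OF sS assms(2)] by simp
  have inN: "E (sd A (s ` A)) \<in> N" using N_mult[OF assms(1) h1] by (simp add: E_mult)
  have sA: "z \<in> s ` A \<longleftrightarrow> s z \<in> A" for z
    by (metis image_iff s_def swp_invol)
  have dA: "agree m z w \<Longrightarrow> z \<in> A \<longleftrightarrow> w \<in> A" for z w using assms(3) by (simp add: dep_def)
  have "sd A (s ` A) = cyl m x \<union> cyl m y"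
  proof (rule Set.set_eqI)
    fix z
    show "z \<in> sd A (s ` A) \<longleftrightarrow> z \<in> cyl m x \<union> cyl m y"
    proof (cases "agree m z x")
      case True
      then have "agree m (s z) y" by (simp add: s_def swp_u)
      then have "s z \<notin> A" using dA assms(5) by blast
      moreover have "z \<in> A" using dA True assms(4) by blast
      ultimately show ?thesis using True by (simp add: sd_def sA mem_cyl)
    next
      case False
      show ?thesis
      proof (cases "agree m z y")
        case True
        then have "agree m (s z) x" using False by (simp add: s_def swp_v)
        then have "s z \<in> A" using dA assms(4) by blast
        moreover have "z \<notin> A" using dA True assms(5) by blast
        ultimately show ?thesis using True by (simp add: sd_def sA mem_cyl)
      next
        case F2: False
        then have "s z = z" using False by (simp add: s_def swp_fix)
        then show ?thesis using False F2 by (simp add: sd_def sA mem_cyl)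
      qed
    qed
  qed
  then show ?thesis using inN by simp
qed

lemma pair_swap:
  assumes "E (cyl m a \<union> cyl m b) \<in> N"
  shows "E (cyl m (swp m u v a) \<union> cyl m (swp m u v b)) \<in> N"
proof -
  define s where "s = swp m u v"
  have sS: "s \<in> Sinf" by (simp add: s_def swp_Sinf)
  have c: "clopen_set (cyl m a \<union> cyl m b)" by (simp add: clopen_Un clopen_cyl)
  have "s ` (cyl m a \<union> cyl m b) = cyl m (s a) \<union> cyl m (s b)"
    unfolding image_Un s_def using lvl_image_cyl[OF bij_swp lvl_swp] by simp
  then show ?thesis using N_conj[OF P_carrier[OF sS] assms] conj_P_E[OF sS c] by (simp add: s_def)
qed

lemma pair_transport:
  assumes "E (cyl m a \<union> cyl m b) \<in> N" "\<not> agree m a b" "\<not> agree m p q"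
  shows "E (cyl m p \<union> cyl m q) \<in> N"
proof (cases "agree m q a")
  case True
  have "\<not> agree m a p" using True assms(3) agree_sym agree_trans by blast
  then have e1: "swp m b p a = a" using assms(2) agree_sym by (meson swp_fix)
  have e2: "cyl m (swp m b p b) = cyl m p" by (rule cyl_cong) (simp add: swp_u)
  have "cyl m a = cyl m q" using True cyl_cong agree_sym by blast
  then show ?thesis using pair_swap[OF assms(1), of b p] e1 e2 by (simp add: Un_commute)
next
  case False
  then have e1: "swp m b q a = a" using assms(2) agree_sym by (meson swp_fix)
  have e2: "cyl m (swp m b q b) = cyl m q" by (rule cyl_cong) (simp add: swp_u)
  have h: "E (cyl m a \<union> cyl m q) \<in> N" using pair_swap[OF assms(1), of b q] e1 e2 by simp
  have e3: "swp m a p q = q" using False assms(3) agree_sym by (meson swp_fix)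
  have e4: "cyl m (swp m a p a) = cyl m p" by (rule cyl_cong) (simp add: swp_u)
  show ?thesis using pair_swap[OF h, of a p] e3 e4 by simp
qed

lemma single_in:
  assumes "E A \<in> N" "clopen_set A" "A \<noteq> {}" "A \<noteq> UNIV" "dep K A"
  shows "E (cyl K w) \<in> N"
proof -
  obtain x y where xy: "x \<in> A" "y \<notin> A" using assms(3,4) by blast
  have dS: "dep (Suc K) A" using dep_mono[OF assms(5)] by simp
  have nxy: "\<not> agree (Suc K) x y" using dS xy by (auto simp: dep_def)
  have h: "E (cyl (Suc K) x \<union> cyl (Suc K) y) \<in> N" by (rule pair_in[OF assms(1,2) dS xy])
  define w0 where "w0 = w(K := False)"
  define w1 where "w1 = w(K := True)"
  have n01: "\<not> agree (Suc K) w0 w1" by (auto simp: agree_def w0_def w1_def)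
  have "cyl K w = cyl (Suc K) w0 \<union> cyl (Suc K) w1"
    by (auto simp: cyl_def agree_def w0_def w1_def less_Suc_eq)
  then show ?thesis using pair_transport[OF h nxy n01] by simp
qed


lemma all_in:
  assumes "E A \<in> N" "clopen_set A" "A \<noteq> {}" "A \<noteq> UNIV" "clopen_set B"
  shows "E B \<in> N"
proof -
  obtain kA where kA: "dep kA A" using clopen_imp_dep[OF assms(2)] by blast
  obtain kB where kB: "dep kB B" using clopen_imp_dep[OF assms(5)] by blast
  define K where "K = max kA kB"
  have dA: "dep K A" and dB: "dep K B" using dep_mono kA kB by (auto simp: K_def)
  define W where "W = {xs. length xs = K \<and> pt xs \<in> B}"
  have fW: "finite W"
    by (rule finite_subset[OF _ finite_lists_length_eq[of "UNIV :: bool set" K]]) (auto simp: W_def)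
  have ind: "F \<subseteq> W \<Longrightarrow> E (\<Union>xs\<in>F. cyl K (pt xs)) \<in> N" if "finite F" for F
    using that
  proof (induction F rule: finite_induct)
    case empty
    then show ?case using N_one by (simp add: E_one)
  next
    case (insert xs F)
    have disj: "cyl K (pt xs) \<inter> (\<Union>ys\<in>F. cyl K (pt ys)) = {}"
    proof (rule ccontr)
      assume "cyl K (pt xs) \<inter> (\<Union>ys\<in>F. cyl K (pt ys)) \<noteq> {}"
      then obtain z ys where z: "ys \<in> F" "agree K z (pt xs)" "agree K z (pt ys)"
        by (auto simp: mem_cyl)
      have l: "length xs = K" "length ys = K" using insert.prems z(1) by (auto simp: W_def)
      have "xs = ys"
      proof (rule nth_equalityI)
        show "length xs = length ys" using l by simp
        fix i assume "i < length xs"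
        then show "xs ! i = ys ! i" using z(2,3) l by (auto simp: agree_def pt_def)
      qed
      then show False using z(1) insert.hyps(2) by simp
    qed
    have "(\<Union>ys\<in>insert xs F. cyl K (pt ys)) = sd (cyl K (pt xs)) (\<Union>ys\<in>F. cyl K (pt ys))"
      using disj by (auto simp: sd_def)
    moreover have "E (cyl K (pt xs)) \<in> N" by (rule single_in[OF assms(1-4) dA])
    moreover have "E (\<Union>ys\<in>F. cyl K (pt ys)) \<in> N" using insert by simp
    ultimately show ?case using N_mult E_mult by metis
  qed
  have "B = (\<Union>xs\<in>W. cyl K (pt xs))"
  proof (rule Set.set_eqI)
    fix z
    show "z \<in> B \<longleftrightarrow> z \<in> (\<Union>xs\<in>W. cyl K (pt xs))"
    proof
      assume zB: "z \<in> B"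
      define xs where "xs = map z [0..<K]"
      have ag: "agree K z (pt xs)" by (simp add: agree_def pt_def xs_def)
      then have "pt xs \<in> B" using dB zB by (simp add: dep_def)
      then have "xs \<in> W" by (simp add: W_def xs_def)
      then show "z \<in> (\<Union>xs\<in>W. cyl K (pt xs))" using ag by (auto simp: mem_cyl)
    next
      assume "z \<in> (\<Union>xs\<in>W. cyl K (pt xs))"
      then obtain xs where "xs \<in> W" "agree K z (pt xs)" by (auto simp: mem_cyl)
      then show "z \<in> B" using dB by (simp add: dep_def W_def)
    qed
  qed
  then show ?thesis using ind[OF fW] by simp
qed

end

lemma agree_commute: "agree n x y \<longleftrightarrow> agree n y x" by (auto simp: agree_def)

lemma finv_swp: "finv (swp n u v) = swp n u v"
  by (rule inv_unique_comp) (simp_all add: swp_comp_self)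

lemma pt_agree_inj:
  assumes "length xs = L" "length ys = L" "agree L (pt xs) (pt ys)" shows "xs = ys"
proof (rule nth_equalityI)
  show "length xs = length ys" using assms by simp
  fix i assume "i < length xs"
  then have "pt xs i = pt ys i" using assms by (simp add: agree_def)
  then show "xs ! i = ys ! i" using \<open>i < length xs\<close> assms by (simp add: pt_def)
qed

lemma agree_pt_map: "agree L z (pt (map z [0..<L]))"
  by (auto simp: agree_def pt_def)

lemma spl_L[simp]: "spl L a z L = z L" by (simp add: spl_def)

lemma agree_Suc_upd: "agree (Suc L) z (w(L := b)) \<longleftrightarrow> agree L z w \<and> z L = b"
  by (auto simp: agree_def less_Suc_eq)

lemma agree_upd_L1: "agree L (v(L := c)) w \<longleftrightarrow> agree L v w"
  by (auto simp: agree_def)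
lemma agree_upd_L2: "agree L w (v(L := c)) \<longleftrightarrow> agree L w v"
  by (auto simp: agree_def)

lemma spl_Suc_upd: "z L = c \<Longrightarrow> spl (Suc L) (v(L := c)) z = spl L v z"
  by (auto simp: spl_def fun_eq_iff less_Suc_eq)

lemma spl_at_L: "spl (Suc L) a z L = a L" by (simp add: spl_def)

lemma swap_split:
  assumes "\<not> agree L u v"
  shows "swp L u v = swp (Suc L) (u(L := False)) (v(L := False)) \<circ> swp (Suc L) (u(L := True)) (v(L := True))"
proof
  fix z
  have nuv: "\<not> agree L v u" using assms agree_commute by blast
  have t1: "agree (Suc L) (spl (Suc L) a z) (w(L := b)) \<longleftrightarrow> agree L a w \<and> a L = b" for a w b
    by (simp add: agree_spl_iff agree_Suc_upd)
  show "swp L u v z = (swp (Suc L) (u(L := False)) (v(L := False)) \<circ> swp (Suc L) (u(L := True)) (v(L := True))) z"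
  proof (cases "agree L z u")
    case True
    then have nzv: "\<not> agree L z v" using assms by (auto simp: agree_def)
    show ?thesis
    proof (cases "z L")
      case True
      then show ?thesis using \<open>agree L z u\<close> nzv assms nuv
        by (simp add: swp_def agree_Suc_upd t1 agree_upd_L1 spl_Suc_upd agree_spl_iff)
    next
      case False
      then show ?thesis using \<open>agree L z u\<close> nzv assms nuv
        by (simp add: swp_def agree_Suc_upd t1 agree_upd_L1 spl_Suc_upd agree_spl_iff)
    qed
  next
    case False
    show ?thesis
    proof (cases "agree L z v")
      case True
      show ?thesis
      proof (cases "z L")
        case T: True
        then show ?thesis using \<open>\<not> agree L z u\<close> True assms nuv
          by (simp add: swp_def agree_Suc_upd t1 agree_upd_L1 spl_Suc_upd agree_spl_iff)
      next
        case F: False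
        then show ?thesis using \<open>\<not> agree L z u\<close> True assms nuv
          by (simp add: swp_def agree_Suc_upd t1 agree_upd_L1 spl_Suc_upd agree_spl_iff)
      qed
    next
      case F2: False
      then show ?thesis using \<open>\<not> agree L z u\<close>
        by (simp add: swp_def agree_Suc_upd)
    qed
  qed
qed

definition dist4 :: "nat \<Rightarrow> cantor \<Rightarrow> cantor \<Rightarrow> cantor \<Rightarrow> cantor \<Rightarrow> bool" where
  "dist4 K a b c d \<longleftrightarrow> \<not> agree K a b \<and> \<not> agree K a c \<and> \<not> agree K a d \<and>
     \<not> agree K b c \<and> \<not> agree K b d \<and> \<not> agree K c d"

lemma extend:
  assumes "bij s" "lvl K s" "\<forall>(a, p)\<in>S. agree K (s a) p"
    "\<forall>(a, p)\<in>S. \<not> agree K a a0 \<and> \<not> agree K p p0"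
  shows "\<exists>s'. bij s' \<and> lvl K s' \<and> agree K (s' a0) p0 \<and> (\<forall>(a, p)\<in>S. agree K (s' a) p)"
proof (intro exI conjI)
  define s' where "s' = swp K (s a0) p0 \<circ> s"
  show "bij s'" unfolding s'_def by (rule bij_comp[OF assms(1) bij_swp])
  show "lvl K s'" unfolding s'_def by (rule lvl_comp[OF lvl_swp assms(2)])
  show "agree K (s' a0) p0" unfolding s'_def by (simp add: swp_u)
  show "\<forall>(a, p)\<in>S. agree K (s' a) p"
  proof (intro ballI, clarify)
    fix a p assume ap: "(a, p) \<in> S"
    have sa: "agree K (s a) p" using assms(3) ap by blast
    have "\<not> agree K a a0" "\<not> agree K p p0" using assms(4) ap by blast+
    then have "\<not> agree K (s a) (s a0)" "\<not> agree K (s a) p0"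
      using lvl_agree_iff[OF assms(1,2), of a a0] sa by (auto simp: agree_def)
    then show "agree K (s' a) p" using sa by (simp add: s'_def swp_fix)
  qed
qed

lemma extend4:
  assumes "dist4 K a b c d" "dist4 K p q r t"
  shows "\<exists>s. bij s \<and> lvl K s \<and> agree K (s a) p \<and> agree K (s b) q \<and> agree K (s c) r \<and> agree K (s d) t"
proof -
  obtain s1 where s1: "bij s1" "lvl K s1" "agree K (s1 a) p"
    using extend[of id K "{}" a p] bij_id lvl_id by auto
  obtain s2 where s2: "bij s2" "lvl K s2" "agree K (s2 b) q" "agree K (s2 a) p"
    using extend[OF s1(1,2), of "{(a,p)}" b q] s1(3) assms by (auto simp: dist4_def)
  obtain s3 where s3: "bij s3" "lvl K s3" "agree K (s3 c) r" "agree K (s3 a) p" "agree K (s3 b) q"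
    using extend[OF s2(1,2), of "{(a,p),(b,q)}" c r] s2(3,4) assms by (auto simp: dist4_def)
  obtain s4 where s4: "bij s4" "lvl K s4" "agree K (s4 d) t" "agree K (s4 a) p" "agree K (s4 b) q"
      "agree K (s4 c) r"
    using extend[OF s3(1,2), of "{(a,p),(b,q),(c,r)}" d t] s3(3,4,5) assms by (auto simp: dist4_def)
  then show ?thesis by blast
qed

lemma conj_fun: "bij s \<Longrightarrow> s \<circ> (f \<circ> h) \<circ> finv s = (s \<circ> f \<circ> finv s) \<circ> (s \<circ> h \<circ> finv s)"
  by (simp add: fun_eq_iff)

definition mv :: "nat \<Rightarrow> (cantor \<Rightarrow> cantor) \<Rightarrow> bool list set" where
  "mv L h = {xs. length xs = L \<and> \<not> agree L (h (pt xs)) (pt xs)}"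

lemma finite_mv: "finite (mv L h)"
  by (rule finite_subset[OF _ finite_lists_length_eq[of "UNIV :: bool set" L]]) (auto simp: mv_def)

lemma lvl_Sinf: "bij h \<Longrightarrow> lvl L h \<Longrightarrow> h \<in> Sinf"
  unfolding Sinf_iff by blast

context
  fixes N assumes nN: "N \<lhd> Ggrp"
begin

lemmas N_mult' = N_mult[OF nN]
lemmas N_inv' = N_inv[OF nN]
lemmas N_one' = N_one[OF nN]
lemmas N_sub' = N_sub[OF nN]
lemmas N_conj' = N_conj[OF nN]

lemma P_comm:
  assumes "P g \<in> N" "g \<in> Sinf" "s \<in> Sinf"
  shows "P (g \<circ> s \<circ> finv g \<circ> finv s) \<in> N"
proof -
  have h: "P s \<otimes>\<^bsub>Ggrp\<^esub> inv\<^bsub>Ggrp\<^esub> (P g) \<otimes>\<^bsub>Ggrp\<^esub> inv\<^bsub>Ggrp\<^esub> (P s) \<in> N"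
    by (rule N_conj'[OF P_carrier[OF assms(3)] N_inv'[OF assms(1)]])
  have "P g \<otimes>\<^bsub>Ggrp\<^esub> (P s \<otimes>\<^bsub>Ggrp\<^esub> inv\<^bsub>Ggrp\<^esub> (P g) \<otimes>\<^bsub>Ggrp\<^esub> inv\<^bsub>Ggrp\<^esub> (P s)) \<in> N"
    by (rule N_mult'[OF assms(1) h])
  moreover have "P g \<otimes>\<^bsub>Ggrp\<^esub> (P s \<otimes>\<^bsub>Ggrp\<^esub> inv\<^bsub>Ggrp\<^esub> (P g) \<otimes>\<^bsub>Ggrp\<^esub> inv\<^bsub>Ggrp\<^esub> (P s))
      = P (g \<circ> s \<circ> finv g \<circ> finv s)"
    using assms(2,3) Sinf_bij Sinf_inv
    by (simp add: P_inv P_mult bij_comp o_assoc)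
  ultimately show ?thesis by simp
qed

lemma dbl_from_g:
  assumes "P g \<in> N" "g \<in> Sinf" "lvl n g" "g x \<noteq> x" "Suc n \<le> K"
  shows "\<exists>a b c d. dist4 K a b c d \<and> P (swp K a b \<circ> swp K c d) \<in> N"
proof -
  have bg: "bij g" using assms(2) by (simp add: Sinf_bij)
  have lK: "lvl K g" using lvl_mono[OF assms(3)] assms(5) by simp
  define a0 where "a0 = x(n := False)"
  define b0 where "b0 = x(n := True)"
  define s where "s = swp K a0 b0"
  have "P (g \<circ> s \<circ> finv g \<circ> finv s) \<in> N" using P_comm[OF assms(1,2)] swp_Sinf by (simp add: s_def)
  moreover have "g \<circ> s \<circ> finv g = swp K (g a0) (g b0)" unfolding s_def by (rule swp_conj[OF bg lK])
  ultimately have inN: "P (swp K (g a0) (g b0) \<circ> s) \<in> N" by (simp add: s_def finv_swp)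
  have nx: "\<not> agree n (g x) x" by (rule not_agree_lvl[OF assms(3,4)])
  have ax: "agree n a0 x" "agree n b0 x" by (auto simp: agree_def a0_def b0_def)
  have gax: "agree n (g a0) (g x)" "agree n (g b0) (g x)" using ax lvl_agree[OF assms(3)] by blast+
  have n1: "\<not> agree n (g y) z" if "agree n (g y) (g x)" "agree n z x" for y z
    using that nx by (auto simp: agree_def)
  have ab: "\<not> agree K a0 b0" using assms(5) by (auto simp: agree_def a0_def b0_def)
  have gab: "\<not> agree K (g a0) (g b0)" using ab lvl_agree_iff[OF bg lK] by simp
  have "\<not> agree n (g a0) a0" "\<not> agree n (g a0) b0" "\<not> agree n (g b0) a0" "\<not> agree n (g b0) b0"
    using n1 gax ax by blast+
  then have "\<not> agree K (g a0) a0" "\<not> agree K (g a0) b0" "\<not> agree K (g b0) a0" "\<not> agree K (g b0) b0"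
    using assms(5) not_agree_mono[of n] by simp_all
  then have "dist4 K (g a0) (g b0) a0 b0" using ab gab by (simp add: dist4_def)
  then show ?thesis using inN unfolding s_def by blast
qed

lemma dbl_transport:
  assumes "P (swp K a b \<circ> swp K c d) \<in> N" "dist4 K a b c d" "dist4 K p q r t"
  shows "P (swp K p q \<circ> swp K r t) \<in> N"
proof -
  obtain s where s: "bij s" "lvl K s" "agree K (s a) p" "agree K (s b) q" "agree K (s c) r" "agree K (s d) t"
    using extend4[OF assms(2,3)] by blast
  have sS: "s \<in> Sinf" using s by (simp add: lvl_Sinf)
  have "P s \<otimes>\<^bsub>Ggrp\<^esub> P (swp K a b \<circ> swp K c d) \<otimes>\<^bsub>Ggrp\<^esub> inv\<^bsub>Ggrp\<^esub> (P s) \<in> N"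
    by (rule N_conj'[OF P_carrier[OF sS] assms(1)])
  moreover have "P s \<otimes>\<^bsub>Ggrp\<^esub> P (swp K a b \<circ> swp K c d) \<otimes>\<^bsub>Ggrp\<^esub> inv\<^bsub>Ggrp\<^esub> (P s)
     = P (s \<circ> (swp K a b \<circ> swp K c d) \<circ> finv s)"
    using s(1) sS by (simp add: P_inv P_mult bij_comp bij_swp)
  moreover have "s \<circ> (swp K a b \<circ> swp K c d) \<circ> finv s = swp K (s a) (s b) \<circ> swp K (s c) (s d)"
    unfolding conj_fun[OF s(1)] swp_conj[OF s(1,2)] ..
  moreover have "swp K (s a) (s b) = swp K p q" "swp K (s c) (s d) = swp K r t"
    using swp_cong[OF s(3,4)] swp_cong[OF s(5,6)] by simp_all
  ultimately show ?thesis by simp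
qed

lemma decomp:
  assumes sw: "\<And>u v. P (swp L u v) \<in> N"
  shows "bij h \<Longrightarrow> lvl L h \<Longrightarrow> P h \<in> N"
proof (induction "card (mv L h)" arbitrary: h rule: less_induct)
  case less
  show ?case
  proof (cases "mv L h = {}")
    case True
    have "h = id"
    proof
      fix z
      have "agree L (h (pt (map z [0..<L]))) (pt (map z [0..<L]))"
        using True by (auto simp: mv_def)
      moreover have "agree L (h z) (h (pt (map z [0..<L])))"
        using lvl_agree[OF less.prems(2) agree_pt_map] .
      ultimately have "agree L (h z) z" using agree_pt_map[of L z] by (auto simp: agree_def)
      then show "h z = id z"
      proof -
        assume az: "agree L (h z) z"
        show "h z = id z"
        proof
          fix i show "h z i = id z i"
            using az lvl_high[OF less.prems(2), of i z] by (cases "i < L") (auto simp: agree_def)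
        qed
      qed
    qed
    then show ?thesis using N_one' by (simp add: P_one)
  next
    case False
    then obtain xs where xs: "xs \<in> mv L h" by blast
    define w where "w = pt xs"
    define h' where "h' = swp L w (h w) \<circ> h"
    have bh': "bij h'" unfolding h'_def by (rule bij_comp[OF less.prems(1) bij_swp])
    have lh': "lvl L h'" unfolding h'_def by (rule lvl_comp[OF lvl_swp less.prems(2)])
    have nw: "\<not> agree L (h w) w" using xs by (simp add: mv_def w_def)
    have lx: "length xs = L" using xs by (simp add: mv_def)
    have sub: "mv L h' \<subseteq> mv L h - {xs}"
    proof
      fix ys assume ys: "ys \<in> mv L h'"
      have ly: "length ys = L" using ys by (simp add: mv_def)
      have nys: "\<not> agree L (h' (pt ys)) (pt ys)" using ys by (simp add: mv_def)
      have "ys \<noteq> xs"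
      proof
        assume "ys = xs"
        then have "agree L (h' (pt ys)) (pt ys)"
          using nw by (simp add: h'_def w_def swp_v)
        then show False using nys by simp
      qed
      moreover have "ys \<in> mv L h"
      proof (rule ccontr)
        assume "ys \<notin> mv L h"
        then have hy: "agree L (h (pt ys)) (pt ys)" using ly by (simp add: mv_def)
        have "\<not> agree L (pt ys) w" using \<open>ys \<noteq> xs\<close> pt_agree_inj[OF ly lx] by (auto simp: w_def)
        then have "\<not> agree L (h (pt ys)) w" "\<not> agree L (h (pt ys)) (h w)"
          using hy lvl_agree_iff[OF less.prems, of "pt ys" w] by (auto simp: agree_def)
        then have "h' (pt ys) = h (pt ys)" by (simp add: h'_def swp_fix)
        then show False using nys hy by simp
      qed
      ultimately show "ys \<in> mv L h - {xs}" by simp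
    qed
    have "card (mv L h') < card (mv L h)"
    proof (rule psubset_card_mono[OF finite_mv])
      show "mv L h' \<subset> mv L h" using sub xs by blast
    qed
    then have "P h' \<in> N" using less.hyps bh' lh' by blast
    moreover have "P h = P (swp L w (h w)) \<otimes>\<^bsub>Ggrp\<^esub> P h'"
    proof -
      have "swp L w (h w) \<circ> h' = h" by (simp add: h'_def fun_eq_iff)
      then show ?thesis by (simp add: P_mult bij_swp)
    qed
    ultimately show ?thesis using N_mult'[OF sw] by metis
  qed
qed

lemma step3:
  assumes allE: "\<And>B. clopen_set B \<Longrightarrow> E B \<in> N" and gN: "(cls C, g) \<in> N" and gid: "g \<noteq> id"
  shows "N = carrier Ggrp"
proof
  show "N \<subseteq> carrier Ggrp" by (rule N_sub')
next
  have cC: "clopen_set C" and gS: "g \<in> Sinf" using N_sub' gN by (auto simp: carrier_G2)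
  have "E C \<otimes>\<^bsub>Ggrp\<^esub> (cls C, g) = P g" by (simp add: E_def P_def mult_cls)
  then have PgN: "P g \<in> N" using N_mult'[OF allE[OF cC] gN] by simp
  obtain n where ln: "lvl n g" using gS by (auto simp: Sinf_iff)
  obtain x where gx: "g x \<noteq> x" using gid by (metis eq_id_iff)
  show "carrier Ggrp \<subseteq> N"
  proof
    fix y assume "y \<in> carrier Ggrp"
    then obtain B h where y: "y = (cls B, h)" "clopen_set B" "h \<in> Sinf" by (auto simp: carrier_G)
    obtain Lh where lh: "lvl Lh h" and bh: "bij h" using y(3) by (auto simp: Sinf_iff)
    define L where "L = max Lh n"
    have hL: "lvl L h" using lvl_mono[OF lh] by (simp add: L_def)
    obtain a b c d where abcd: "dist4 (Suc L) a b c d" "P (swp (Suc L) a b \<circ> swp (Suc L) c d) \<in> N"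
      using dbl_from_g[OF PgN gS ln gx, of "Suc L"] by (auto simp: L_def)
    have sw: "P (swp L u v) \<in> N" for u v
    proof (cases "agree L u v")
      case True
      then show ?thesis using N_one' by (simp add: swp_self P_one)
    next
      case False
      have "dist4 (Suc L) (u(L := False)) (v(L := False)) (u(L := True)) (v(L := True))"
        using False by (simp add: dist4_def agree_Suc_upd agree_upd_L1 agree_upd_L2 agree_commute)
      then show ?thesis using dbl_transport[OF abcd(2) abcd(1)] swap_split[OF False] by simp
    qed
    have "P h \<in> N" by (rule decomp[OF sw bh hL])
    moreover have "E B \<in> N" by (rule allE[OF y(2)])
    ultimately have "E B \<otimes>\<^bsub>Ggrp\<^esub> P h \<in> N" by (rule N_mult'[rotated])
    then show "y \<in> N" by (simp add: E_P y(1))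
  qed
qed

end

lemma normal_one: "{\<one>\<^bsub>Ggrp\<^esub>} \<lhd> Ggrp"
  unfolding G.normal_inv_iff
proof (intro conjI ballI)
  show "subgroup {\<one>\<^bsub>Ggrp\<^esub>} Ggrp" by (rule G.triv_subgroup)
  fix x h assume "x \<in> carrier Ggrp" "h \<in> {\<one>\<^bsub>Ggrp\<^esub>}"
  then show "x \<otimes>\<^bsub>Ggrp\<^esub> h \<otimes>\<^bsub>Ggrp\<^esub> inv\<^bsub>Ggrp\<^esub> x \<in> {\<one>\<^bsub>Ggrp\<^esub>}" by simp
qed

lemma normal_carrier: "carrier Ggrp \<lhd> Ggrp"
  unfolding G.normal_inv_iff
proof (intro conjI ballI)
  show "subgroup (carrier Ggrp) Ggrp" by (rule G.subgroup_self)
  fix x h assume "x \<in> carrier Ggrp" "h \<in> carrier Ggrp"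
  then show "x \<otimes>\<^bsub>Ggrp\<^esub> h \<otimes>\<^bsub>Ggrp\<^esub> inv\<^bsub>Ggrp\<^esub> x \<in> carrier Ggrp" by simp
qed

lemma Cpart_iff: "y \<in> Cpart \<longleftrightarrow> (\<exists>A. clopen_set A \<and> y = E A)"
  by (auto simp: Cpart_def Ctilde_def E_def)

lemma finv_id: "finv id = id" by simp

lemma normal_Cpart: "Cpart \<lhd> Ggrp"
  unfolding G.normal_inv_iff
proof (intro conjI ballI)
  show "subgroup Cpart Ggrp"
  proof (rule G.subgroupI)
    show "Cpart \<subseteq> carrier Ggrp" using E_carrier by (auto simp: Cpart_iff)
    have "E {} \<in> Cpart" using clopen_empty by (auto simp: Cpart_iff)
    then show "Cpart \<noteq> {}" by blast
    fix a assume "a \<in> Cpart"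
    then obtain A where "clopen_set A" "a = E A" by (auto simp: Cpart_iff)
    then show "inv\<^bsub>Ggrp\<^esub> a \<in> Cpart" by (auto simp: Cpart_iff E_inv)
  next
    fix a b assume "a \<in> Cpart" "b \<in> Cpart"
    then obtain A B where "clopen_set A" "a = E A" "clopen_set B" "b = E B" by (auto simp: Cpart_iff)
    then have "clopen_set (sd A B)" "a \<otimes>\<^bsub>Ggrp\<^esub> b = E (sd A B)" by (simp_all add: E_mult clopen_sd)
    then show "a \<otimes>\<^bsub>Ggrp\<^esub> b \<in> Cpart" unfolding Cpart_iff by blast
  qed
next
  fix x h assume "x \<in> carrier Ggrp" "h \<in> Cpart"
  then obtain A g B where x: "x = (cls A, g)" "clopen_set A" "g \<in> Sinf"
    and h: "clopen_set B" "h = E B" by (auto simp: carrier_G Cpart_iff)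
  have bg: "bij g" using x(3) by (simp add: Sinf_bij)
  have ggA: "g ` finv g ` A = A" using bg by (simp add: image_comp surj_iff[THEN iffD1] bij_is_surj)
  have gid: "g \<circ> finv g = id" using bg by (simp add: surj_iff[THEN iffD1] bij_is_surj)
  have "x \<otimes>\<^bsub>Ggrp\<^esub> h \<otimes>\<^bsub>Ggrp\<^esub> inv\<^bsub>Ggrp\<^esub> x = (cls (sd (sd A (g ` B)) (g ` finv g ` A)), g \<circ> id \<circ> finv g)"
    unfolding x(1) h(2) inv_G[OF x(2,3)] using bg by (simp add: E_def mult_cls)
  also have "\<dots> = E (g ` B)"
  proof -
    have "sd (sd A (g ` B)) A = g ` B" by (auto simp: sd_def)
    then show ?thesis unfolding ggA using gid by (simp add: E_def)
  qed
  finally show "x \<otimes>\<^bsub>Ggrp\<^esub> h \<otimes>\<^bsub>Ggrp\<^esub> inv\<^bsub>Ggrp\<^esub> x \<in> Cpart"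
    using Sinf_image_clopen[OF x(3) h(1)] by (auto simp: Cpart_iff)
qed

lemma N_pair: assumes "N \<lhd> Ggrp" "(c, g) \<in> N"
  shows "\<exists>C. c = cls C \<and> clopen_set C \<and> g \<in> Sinf"
proof -
  have "(c, g) \<in> carrier Ggrp" using N_sub[OF assms(1)] assms(2) by blast
  then have "c \<in> Ctilde" "g \<in> Sinf" by (simp_all add: Ggrp_def)
  then show ?thesis by (auto simp: Ctilde_def)
qed

lemma cls_trivial: "cls C = cls {} \<longleftrightarrow> C = {} \<or> C = UNIV"
  by (auto simp: cls_eq_iff)

lemma classify:
  assumes nN: "N \<lhd> Ggrp"
  shows "N = {\<one>\<^bsub>Ggrp\<^esub>} \<or> N = Cpart \<or> N = carrier Ggrp"
proof (cases "\<exists>c g. (c, g) \<in> N \<and> g \<noteq> id")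
  case True
  then obtain c g where cg: "(c, g) \<in> N" "g \<noteq> id" by blast
  then obtain C where "c = cls C" using N_pair[OF nN] by blast
  then have cg': "(cls C, g) \<in> N" using cg by simp
  obtain D where D: "clopen_set D" "D \<noteq> {}" "D \<noteq> UNIV" "E D \<in> N"
    using step1[OF nN cg' cg(2)] by blast
  have "\<And>B. clopen_set B \<Longrightarrow> E B \<in> N" using all_in[OF nN D(4,1,2,3)] .
  then have "N = carrier Ggrp" using step3[OF nN _ cg' cg(2)] by blast
  then show ?thesis by blast
next
  case False
  then have allid: "\<And>c g. (c, g) \<in> N \<Longrightarrow> g = id" by blast
  show ?thesis
  proof (cases "\<exists>c. (c, id) \<in> N \<and> c \<noteq> cls {}")
    case True
    then obtain c where c: "(c, id) \<in> N" "c \<noteq> cls {}" by blast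
    then obtain C where C: "c = cls C" "clopen_set C" using N_pair[OF nN] by blast
    have CE: "E C \<in> N" using c C by (simp add: E_def)
    have "C \<noteq> {}" "C \<noteq> UNIV" using c(2) C(1) cls_trivial by auto
    then have allE: "\<And>B. clopen_set B \<Longrightarrow> E B \<in> N" using all_in[OF nN CE C(2)] by blast
    have "N = Cpart"
    proof
      show "Cpart \<subseteq> N" using allE by (auto simp: Cpart_iff)
      show "N \<subseteq> Cpart"
      proof
        fix y assume y: "y \<in> N"
        obtain c h where yy: "y = (c, h)" by fastforce
        then obtain B where "y = (cls B, h)" "clopen_set B" using N_pair[OF nN] y by blast
        moreover have "h = id" using allid y calculation(1) by blast
        ultimately show "y \<in> Cpart" by (auto simp: Cpart_iff E_def)
      qed
    qed
    then show ?thesis by blast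
  next
    case F2: False
    have "N = {\<one>\<^bsub>Ggrp\<^esub>}"
    proof
      show "{\<one>\<^bsub>Ggrp\<^esub>} \<subseteq> N" using N_one[OF nN] by simp
      show "N \<subseteq> {\<one>\<^bsub>Ggrp\<^esub>}"
      proof
        fix y assume y: "y \<in> N"
        obtain c g where yy: "y = (c, g)" by fastforce
        then have "g = id" using allid y by blast
        then have "c = cls {}" using F2 y yy by blast
        then show "y \<in> {\<one>\<^bsub>Ggrp\<^esub>}" using yy \<open>g = id\<close> by (simp add: one_G)
      qed
    qed
    then show ?thesis by blast
  qed
qed

theorem proposition3p1:
  shows "group Ggrp \<and> {H. H \<lhd> Ggrp} = {{\<one>\<^bsub>Ggrp\<^esub>}, Cpart, carrier Ggrp}"
proof
  show "group Ggrp" by (rule group_G)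
  show "{H. H \<lhd> Ggrp} = {{\<one>\<^bsub>Ggrp\<^esub>}, Cpart, carrier Ggrp}"
    using classify normal_one normal_Cpart normal_carrier by blast
qed

end
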